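(* Let $\frac12\le M<\frac23$. Algorithm C (defined in the context) has migration factor at most $M$, and on every input whose optimal offline makespan is $1$ it produces a schedule of makespan at most $2-M$. Hence its competitive ratio is at most $2-M$.
   Context: Model (two hierarchical machines with migration, bin stretching). Jobs $1,2,\dots,n$ arrive one by one ($n$ unknown in advance). Job $j$ has a size $p_j>0$ and a grade of service (GoS) $g_j\in\{1,2\}$; a job of GoS $1$ may only be processed on machine $m_1$, a job of GoS $2$ may be processed on $m_1$ or on $m_2$. The load of a machine is the total size of its jobs, the makespan is the maximum load. When job $j$ arrives, the algorithm must assign it, and may migrate previously arrived jobs (respecting GoS) of total size at most $M\cdot p_j$ (migration factor $M$). Bin stretching: the optimal offline makespan of the complete input is known in advance and scaled to $1$. The competitive ratio is the supremum over inputs of (algorithm's makespan)/(optimal makespan). Notation: $Y_{j}$ is the set of jobs on $m_2$ just after job $j$ has been handled, $y_j$ its total size, $y_0=0$; $p^{\max Y}_j$ is the largest size of a job in $Y_{j-1}$ ($0$ if empty); "sorted $Y_{j-1}$" lists $Y_{j-1}$ in non-increasing order of size; $w_j$ is the total size of the chosen set $W$. Algorithm C (parameter $M$). On arrival of job $j$: Step 2: if $g_j=1$ or $y_{j-1}\ge M$, assign $j$ to $m_1$. Step 3: else if $y_{j-1}+p_j\le 2-M$, assign $j$ to $m_2$. Step 4: else if $p^{\max Y}_j>M\cdot p_j$, assign $j$ to $m_1$. Step 5: otherwise let $W$ be the shortest prefix of sorted $Y_{j-1}$ with total size at least $p_j+y_{j-1}-(2-M)$ (or $W=Y_{j-1}$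 if none exists); migrate the jobs of $W$ to $m_1$ and assign $j$ to $m_2$. *)

theory Defs
  imports Complex_Main
begin

text \<open>Jobs are numbered 1..n; job j has size p j and GoS g j (1 or 2).
  A schedule is given by the set S of jobs on m2 (the rest are on m1).\<close>

definition load1 :: "nat \<Rightarrow> (nat \<Rightarrow> real) \<Rightarrow> nat set \<Rightarrow> real" where
  "load1 n p S = (\<Sum>i\<in>{1..n} - S. p i)"

definition load2 :: "(nat \<Rightarrow> real) \<Rightarrow> nat set \<Rightarrow> real" where
  "load2 p S = (\<Sum>i\<in>S. p i)"

definition makespan :: "nat \<Rightarrow> (nat \<Rightarrow> real) \<Rightarrow> nat set \<Rightarrow> real" where
  "makespan n p S = max (load1 n p S) (load2 p S)"

definition feasible :: "nat \<Rightarrow> (nat \<Rightarrow> nat) \<Rightarrow> nat set \<Rightarrow> bool" where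
  "feasible n g S \<longleftrightarrow> S \<subseteq> {1..n} \<and> (\<forall>i\<in>S. g i = 2)"

definition opt_makespan :: "nat \<Rightarrow> (nat \<Rightarrow> real) \<Rightarrow> (nat \<Rightarrow> nat) \<Rightarrow> real" where
  "opt_makespan n p g = Min (makespan n p ` {S. feasible n g S})"

definition pmaxY :: "(nat \<Rightarrow> real) \<Rightarrow> nat set \<Rightarrow> real" where
  "pmaxY p Y = (if Y = {} then 0 else Max (p ` Y))"

definition prefix_len :: "(nat \<Rightarrow> real) \<Rightarrow> nat list \<Rightarrow> real \<Rightarrow> nat" where
  "prefix_len p ys t =
     (if \<exists>k\<le>length ys. sum_list (map p (take k ys)) \<ge> t
      then (LEAST k. k \<le> length ys \<and> sum_list (map p (take k ys)) \<ge> t)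
      else length ys)"

text \<open>One step of Algorithm C for job j: Y is Y_{j-1}, Y' is Y_j, W is the set
  of migrated jobs. Ties in the sorting of Y_{j-1} may be broken arbitrarily.\<close>
definition C_step :: "real \<Rightarrow> (nat \<Rightarrow> real) \<Rightarrow> (nat \<Rightarrow> nat) \<Rightarrow> nat
    \<Rightarrow> nat set \<Rightarrow> nat set \<Rightarrow> nat set \<Rightarrow> bool" where
  "C_step M p g j Y Y' W \<longleftrightarrow>
     (if g j = 1 \<or> load2 p Y \<ge> M then Y' = Y \<and> W = {}
      else if load2 p Y + p j \<le> 2 - M then Y' = insert j Y \<and> W = {}
      else if pmaxY p Y > M * p j then Y' = Y \<and> W = {}
      else (\<exists>ys. distinct ys \<and> set ys = Y \<and> sorted_wrt (\<lambda>a b. p a \<ge> p b) ys \<and>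
              W = set (take (prefix_len p ys (p j + load2 p Y - (2 - M))) ys) \<and>
              Y' = insert j (Y - W)))"

text \<open>A run of Algorithm C on jobs 1..n: Y j is the set on m2 after job j,
  W j the set migrated when job j is handled.\<close>
definition C_run :: "real \<Rightarrow> nat \<Rightarrow> (nat \<Rightarrow> real) \<Rightarrow> (nat \<Rightarrow> nat)
    \<Rightarrow> (nat \<Rightarrow> nat set) \<Rightarrow> (nat \<Rightarrow> nat set) \<Rightarrow> bool" where
  "C_run M n p g Y W \<longleftrightarrow> Y 0 = {} \<and>
     (\<forall>j\<in>{1..n}. C_step M p g j (Y (j - 1)) (Y j) (W j))"

end

theory Submission
  imports Defs
begin

lemma prefix_props:
  fixes p :: "nat \<Rightarrow> real"
  assumes srt: "sorted_wrt (\<lambda>a b. p a \<ge> p b) ys"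
    and bnd: "\<forall>a\<in>set ys. 0 \<le> p a \<and> p a \<le> c"
    and t0: "0 < t" and t2: "2*t \<le> c" and tl: "t \<le> sum_list (map p ys)"
  shows "t \<le> sum_list (map p (take (prefix_len p ys t) ys)) \<and>
         sum_list (map p (take (prefix_len p ys t) ys)) \<le> c"
proof -
  let ?P = "\<lambda>k. k \<le> length ys \<and> sum_list (map p (take k ys)) \<ge> t"
  have ex: "\<exists>k. ?P k" using tl by (intro exI[of _ "length ys"]) simp
  hence pl: "prefix_len p ys t = (LEAST k. ?P k)" unfolding prefix_len_def by auto
  define k where "k = (LEAST k. ?P k)"
  have Pk: "?P k" unfolding k_def using ex by (rule LeastI_ex)
  have k0: "k \<noteq> 0" proof assume "k = 0" with Pk t0 show False by simp qed
  then obtain m where km: "k = Suc m" by (cases k) auto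
  have mk: "m < (LEAST k. ?P k)" using km unfolding k_def by simp
  have "\<not> ?P m" by (rule not_less_Least[OF mk])
  with Pk km have sm: "sum_list (map p (take m ys)) < t" and ml: "m < length ys" by auto
  have tk: "take k ys = take m ys @ [ys ! m]" using km ml by (simp add: take_Suc_conv_app_nth)
  have "sum_list (map p (take k ys)) \<le> c"
  proof (cases "m = 0")
    case True
    then show ?thesis using tk bnd ml by (simp add: nth_mem)
  next
    case False
    have a: "p (ys ! m) \<le> p (ys ! 0)" using sorted_wrt_nth_less[OF srt, of 0 m] False ml by simp
    have l0: "0 < length (map p (take m ys))" using False ml by simp
    have "map p (take m ys) ! 0 = p (ys ! 0)" using False ml by simp
    hence "p (ys ! 0) \<in> set (map p (take m ys))" using nth_mem[OF l0] by simp
    moreover have "\<And>x. x \<in> set (map p (take m ys)) \<Longrightarrow> x \<ge> 0" using bnd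
      by (auto dest: in_set_takeD)
    ultimately have b: "p (ys ! 0) \<le> sum_list (map p (take m ys))"
      by (rule member_le_sum_list)
    show ?thesis using tk a b sm t2 by simp
  qed
  then show ?thesis using Pk pl k_def by simp
qed

lemma step_facts:
  fixes p :: "nat \<Rightarrow> real"
  assumes st: "C_step M p g j Y Y' W" and fin: "finite Y" and jY: "j \<notin> Y"
   and pos: "\<forall>i\<in>Y. p i > 0" and pj0: "p j > 0" and pj1: "p j \<le> 1" and gj: "g j \<in> {1,2}"
   and M1: "1/2 \<le> M" and M2: "M < 2/3"
  shows "Y' \<subseteq> insert j Y \<and> (j \<in> Y' \<longrightarrow> g j = 2) \<and> sum p W \<le> M * p j
   \<and> (load2 p Y \<le> 2 - M \<longrightarrow> load2 p Y' \<le> 2 - M) \<and> load2 p Y \<le> load2 p Y'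
   \<and> (load2 p Y' < M \<longrightarrow> Y \<subseteq> Y' \<and> (j \<notin> Y' \<longrightarrow> g j = 1 \<or>
        (load2 p Y + p j > 2 - M \<and> (\<exists>b\<in>Y. p b > M * p j))))"
proof -
  have Mp: "0 < M * p j" using M1 pj0 by simp
  have MpM: "M * p j \<le> M" using pj1 M1 by (simp add: mult_left_le)
  show ?thesis
  proof (cases "g j = 1 \<or> load2 p Y \<ge> M")
    case True
    then have "Y' = Y \<and> W = {}" using st unfolding C_step_def by simp
    then show ?thesis using True Mp jY by auto
  next
    case A: False
    have g2: "g j = 2" using A gj by auto
    show ?thesis
    proof (cases "load2 p Y + p j \<le> 2 - M")
      case True
      then have e: "Y' = insert j Y \<and> W = {}" using st A unfolding C_step_def by simp
      have "load2 p Y' = load2 p Y + p j" using e fin jY unfolding load2_def by simp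
      then show ?thesis using e True g2 Mp pj0 by auto
    next
      case B: False
      show ?thesis
      proof (cases "pmaxY p Y > M * p j")
        case True
        then have e: "Y' = Y \<and> W = {}" using st A B unfolding C_step_def by simp
        have Yne: "Y \<noteq> {}" using True Mp unfolding pmaxY_def by auto
        then have "pmaxY p Y \<in> p ` Y" unfolding pmaxY_def using fin by simp
        then obtain b where "b \<in> Y" "p b = pmaxY p Y" by auto
        then have "\<exists>b\<in>Y. p b > M * p j" using True by metis
        then show ?thesis using e B Mp jY by auto
      next
        case C: False
        obtain ys where ys: "distinct ys" "set ys = Y" "sorted_wrt (\<lambda>a b. p a \<ge> p b) ys"
          and We: "W = set (take (prefix_len p ys (p j + load2 p Y - (2 - M))) ys)"
          and Ye: "Y' = insert j (Y - W)"
          using st A B C unfolding C_step_def by auto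
        define t where "t = p j + load2 p Y - (2 - M)"
        have t0: "0 < t" using B t_def by simp
        have yM: "load2 p Y < M" using A by simp
        have "(2 - M) * p j \<le> (2 - M) * 1" using pj1 M2 by (intro mult_left_mono) auto
        then have t2: "2 * t \<le> M * p j" using t_def yM M2 by (simp add: algebra_simps)
        have bnd: "\<forall>a\<in>set ys. 0 \<le> p a \<and> p a \<le> M * p j"
        proof
          fix a assume a: "a \<in> set ys"
          then have aY: "a \<in> Y" using ys by simp
          then have "p a \<le> pmaxY p Y" unfolding pmaxY_def using fin by auto
          then show "0 \<le> p a \<and> p a \<le> M * p j" using C pos aY by force
        qed
        have sl: "sum_list (map p ys) = load2 p Y"
          unfolding load2_def using ys by (simp add: sum_list_distinct_conv_sum_set)
        have tl: "t \<le> sum_list (map p ys)" using sl t_def pj1 M2 by simp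
        have pp: "t \<le> sum_list (map p (take (prefix_len p ys t) ys)) \<and>
           sum_list (map p (take (prefix_len p ys t) ys)) \<le> M * p j"
          by (rule prefix_props[OF ys(3) bnd t0 t2 tl])
        have wsum: "sum p W = sum_list (map p (take (prefix_len p ys t) ys))"
          using We t_def ys(1) by (simp add: sum_list_distinct_conv_sum_set)
        have WY: "W \<subseteq> Y" using We ys(2) by (auto dest: in_set_takeD)
        have "load2 p Y' = p j + (load2 p Y - sum p W)"
          unfolding load2_def Ye using fin jY WY by (simp add: sum_diff finite_subset)
        then have ly: "load2 p Y' = load2 p Y + p j - sum p W" by simp
        have w1: "sum p W \<le> M * p j" and w2: "t \<le> sum p W" using pp wsum by auto
        have "M * p j < p j" using M2 pj0 by simp
        then show ?thesis using ly w1 w2 t_def Ye MpM B M2 g2 by auto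
      qed
    qed
  qed
qed

lemma pair_le_sum:
  fixes p :: "nat \<Rightarrow> real"
  assumes "finite A" "\<forall>i\<in>A. p i \<ge> 0" "x \<in> A" "y \<in> A" "x \<noteq> y"
  shows "p x + p y \<le> sum p A"
proof -
  have "sum p {x, y} \<le> sum p A" using assms by (intro sum_mono2) auto
  then show ?thesis using assms by simp
qed

theorem mainTheorem10:
  fixes M :: real and n :: nat and p :: "nat \<Rightarrow> real" and g :: "nat \<Rightarrow> nat"
    and Y W :: "nat \<Rightarrow> nat set"
  assumes "1/2 \<le> M" and "M < 2/3"
    and "\<forall>j\<in>{1..n}. p j > 0 \<and> g j \<in> {1, 2}"
    and "opt_makespan n p g = 1"
    and "C_run M n p g Y W"
  shows "(\<forall>j\<in>{1..n}. (\<Sum>i\<in>W j. p i) \<le> M * p j) \<and> makespan n p (Y n) \<le> 2 - M"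
proof -
  note M1 = assms(1) and M2 = assms(2) and pg = assms(3)
  have Y0: "Y 0 = {}" and stp: "\<And>j. j \<in> {1..n} \<Longrightarrow> C_step M p g j (Y (j - 1)) (Y j) (W j)"
    using assms(5) unfolding C_run_def by auto
  have finF: "finite {S. feasible n g S}"
    by (rule finite_subset[of _ "Pow {1..n}"]) (auto simp: feasible_def)
  have neF: "{} \<in> {S. feasible n g S}" by (simp add: feasible_def)
  have "opt_makespan n p g \<in> makespan n p ` {S. feasible n g S}"
    unfolding opt_makespan_def using finF neF by (intro Min_in) auto
  then obtain S where fS: "feasible n g S" and mS: "makespan n p S = 1"
    using assms(4) by auto
  have S1: "S \<subseteq> {1..n}" and S2: "\<forall>i\<in>S. g i = 2" using fS unfolding feasible_def by auto
  have l1S: "sum p ({1..n} - S) \<le> 1" and l2S: "sum p S \<le> 1"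
    using mS unfolding makespan_def load1_def load2_def by auto
  have pnn: "\<forall>i\<in>{1..n}. p i \<ge> 0" using pg by force
  have finS: "finite S" using S1 finite_subset by blast
  have p1: "p j \<le> 1" if j: "j \<in> {1..n}" for j
  proof (cases "j \<in> S")
    case True
    have "p j \<le> sum p S" using True finS pnn S1 by (intro member_le_sum) auto
    then show ?thesis using l2S by simp
  next
    case False
    have "p j \<le> sum p ({1..n} - S)" using False j pnn by (intro member_le_sum) auto
    then show ?thesis using l1S by simp
  qed
  have Tsplit: "sum p {1..n} = sum p ({1..n} - S) + sum p S"
    using S1 by (simp add: sum_diff)
  have T2: "sum p {1..n} \<le> 2" using Tsplit l1S l2S by simp
  have inv: "j \<le> n \<Longrightarrow> Y j \<subseteq> {1..j} \<and> (\<forall>i\<in>Y j. g i = 2) \<and> load2 p (Y j) \<le> 2 - M" for j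
  proof (induction j)
    case 0
    then show ?case using Y0 M2 by (simp add: load2_def)
  next
    case (Suc j)
    then have IH: "Y j \<subseteq> {1..j}" "\<forall>i\<in>Y j. g i = 2" "load2 p (Y j) \<le> 2 - M" by auto
    have jn: "Suc j \<in> {1..n}" using Suc by simp
    have sf: "C_step M p g (Suc j) (Y j) (Y (Suc j)) (W (Suc j))" using stp[OF jn] by simp
    have fin: "finite (Y j)" using IH(1) finite_subset by blast
    have pos: "\<forall>i\<in>Y j. p i > 0" using IH(1) pg Suc.prems by force
    have jY: "Suc j \<notin> Y j" using IH(1) by auto
    have pj: "p (Suc j) > 0" "g (Suc j) \<in> {1,2}" using pg jn by auto
    note F = step_facts[OF sf fin jY pos pj(1) p1[OF jn] pj(2) M1 M2]
    have "Y (Suc j) \<subseteq> insert (Suc j) (Y j) \<and> (Suc j \<in> Y (Suc j) \<longrightarrow> g (Suc j) = 2)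
      \<and> load2 p (Y (Suc j)) \<le> 2 - M"
      using F IH jn pg by auto
    moreover have "insert (Suc j) (Y j) \<subseteq> {1..Suc j}" using IH(1) by auto
    ultimately have "Y (Suc j) \<subseteq> {1..Suc j}" by blast
    then show ?case using IH \<open>Y (Suc j) \<subseteq> insert (Suc j) (Y j) \<and> (Suc j \<in> Y (Suc j) \<longrightarrow> g (Suc j) = 2)
      \<and> load2 p (Y (Suc j)) \<le> 2 - M\<close> by blast
  qed
  have SF: "sum p (W j) \<le> M * p j \<and> load2 p (Y (j - 1)) \<le> load2 p (Y j)
   \<and> (load2 p (Y j) < M \<longrightarrow> Y (j - 1) \<subseteq> Y j \<and> (j \<notin> Y j \<longrightarrow> g j = 1 \<or>
        (load2 p (Y (j - 1)) + p j > 2 - M \<and> (\<exists>b\<in>Y (j - 1). p b > M * p j))))"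
    if j: "j \<in> {1..n}" for j
  proof -
    have "j - 1 \<le> n" using j by (simp only: atLeastAtMost_iff) arith
    from inv[OF this] have IH: "Y (j - 1) \<subseteq> {1..j - 1}" by blast
    have fin: "finite (Y (j - 1))" using IH finite_subset by blast
    have pos: "\<forall>i\<in>Y (j - 1). p i > 0" using IH pg j by force
    have jY: "j \<notin> Y (j - 1)" using IH j by auto
    have pj: "p j > 0" "g j \<in> {1,2}" using pg j by auto
    show ?thesis using step_facts[OF stp[OF j] fin jY pos pj(1) p1[OF j] pj(2) M1 M2] by auto
  qed
  have mig: "\<forall>j\<in>{1..n}. (\<Sum>i\<in>W j. p i) \<le> M * p j" using SF by auto
  have Yn: "Y n \<subseteq> {1..n}" "\<forall>i\<in>Y n. g i = 2" "load2 p (Y n) \<le> 2 - M" using inv[of n] by auto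
  have L1eq: "load1 n p (Y n) = sum p {1..n} - load2 p (Y n)"
    unfolding load1_def load2_def using Yn(1) by (simp add: sum_diff)
  have mono: "j \<le> k \<Longrightarrow> k \<le> n \<Longrightarrow> load2 p (Y j) \<le> load2 p (Y k)" for j k
  proof (induction k rule: dec_induct)
    case base then show ?case by simp
  next
    case (step k)
    have "Suc k \<in> {1..n}" using step by simp
    from SF[OF this] have "load2 p (Y k) \<le> load2 p (Y (Suc k))" by simp
    then show ?case using step by simp
  qed
  have L1: "load1 n p (Y n) \<le> 2 - M"
  proof (cases "load2 p (Y n) \<ge> M")
    case True
    then show ?thesis using L1eq T2 by simp
  next
    case False
    have small: "load2 p (Y j) < M" if "j \<le> n" for j using mono[OF that order.refl] False by simp
    have SF2: "Y (j - 1) \<subseteq> Y j \<and> (j \<notin> Y j \<longrightarrow> g j = 1 \<or>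
        (load2 p (Y (j - 1)) + p j > 2 - M \<and> (\<exists>b\<in>Y (j - 1). p b > M * p j)))"
      if j: "j \<in> {1..n}" for j using SF[OF j] small[of j] j by auto
    have sub: "j \<le> k \<Longrightarrow> k \<le> n \<Longrightarrow> Y j \<subseteq> Y k" for j k
    proof (induction k rule: dec_induct)
      case base then show ?case by simp
    next
      case (step k)
      have "Suc k \<in> {1..n}" using step by simp
      from SF2[OF this] have "Y k \<subseteq> Y (Suc k)" by simp
      then show ?case using step by simp
    qed
    define R where "R = {i\<in>{1..n}. g i = 2 \<and> i \<notin> Y n}"
    define G where "G = {i\<in>{1..n}. g i = 1}"
    have Rprop: "p r > 2 - 2 * M \<and> (\<exists>b\<in>Y n. p b > M * p r)" if r: "r \<in> R" for r
    proof -
      have rn: "r \<in> {1..n}" and gr: "g r = 2" and rY: "r \<notin> Y n" using r R_def by auto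
      have "r \<notin> Y r" using sub[of r n] rY rn by auto
      then have c: "load2 p (Y (r - 1)) + p r > 2 - M \<and> (\<exists>b\<in>Y (r - 1). p b > M * p r)"
        using SF2[OF rn] gr by auto
      have r1: "r - 1 \<le> n" using rn by (simp only: atLeastAtMost_iff) arith
      have "load2 p (Y (r - 1)) < M" using small[OF r1] .
      moreover have "Y (r - 1) \<subseteq> Y n" using sub[OF r1 order.refl] .
      ultimately show ?thesis using c by auto
    qed
    have part: "{1..n} - Y n = G \<union> R" using Yn(2) pg unfolding G_def R_def by force
    have GR: "G \<inter> R = {}" unfolding G_def R_def by auto
    have finGR: "finite G" "finite R" unfolding G_def R_def by auto
    have L1GR: "load1 n p (Y n) = sum p G + sum p R"
      unfolding load1_def part using finGR GR by (simp add: sum.union_disjoint)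
    have GS: "G \<subseteq> {1..n} - S" using S2 unfolding G_def by auto
    have MM: "M * M < 2/3 * (2/3)" using M1 M2 by (intro mult_strict_mono) auto
    have big: "(1 + M) * (2 - 2 * M) > 1" using MM by (simp add: algebra_simps)
    show ?thesis
    proof (cases "R = {}")
      case True
      have "sum p G \<le> sum p ({1..n} - S)" using GS pnn by (intro sum_mono2) auto
      then show ?thesis using L1GR True l1S M2 by simp
    next
      case False
      then obtain r where rR: "r \<in> R" by auto
      obtain b where bY: "b \<in> Y n" and pb: "p b > M * p r" using Rprop[OF rR] by auto
      have pr: "p r > 2 - 2 * M" using Rprop[OF rR] by simp
      have rn: "r \<in> {1..n}" and rY: "r \<notin> Y n" using rR R_def by auto
      have bn: "b \<in> {1..n}" using bY Yn(1) by auto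
      have "(1 + M) * (2 - 2 * M) \<le> (1 + M) * p r" using pr M1 by (intro mult_left_mono) auto
      then have rb: "p r + p b > 1" using pb big by (simp add: algebra_simps)
      have nosame: "\<not> (x \<in> S \<and> y \<in> S) \<and> \<not> (x \<notin> S \<and> y \<notin> S)"
        if "x \<in> {1..n}" "y \<in> {1..n}" "x \<noteq> y" "p x + p y > 1" for x y
      proof
        show "\<not> (x \<in> S \<and> y \<in> S)"
          using pair_le_sum[OF finS, of p x y] pnn S1 l2S that by auto
        show "\<not> (x \<notin> S \<and> y \<notin> S)"
          using pair_le_sum[of "{1..n} - S" p x y] pnn l1S that by auto
      qed
      have Rr: "R = {r}"
      proof (rule ccontr)
        assume "R \<noteq> {r}"
        then obtain r' where r'R: "r' \<in> R" and rr: "r' \<noteq> r" using rR by auto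
        have pr': "p r' > 2 - 2 * M" using Rprop[OF r'R] by simp
        have r'n: "r' \<in> {1..n}" and r'Y: "r' \<notin> Y n" using r'R R_def by auto
        have "(2 - 2 * M) + M * (2 - 2 * M) \<le> p r' + M * p r"
          using pr pr' M1 by (intro add_mono mult_left_mono) auto
        then have r'b: "p r' + p b > 1" using pb big by (simp add: algebra_simps)
        have rr': "p r + p r' > 1" using pr pr' M2 by simp
        show False using nosame[OF rn bn _ rb] nosame[OF r'n bn _ r'b] nosame[OF rn r'n _ rr']
          rY r'Y bY rr by metis
      qed
      have L1r: "load1 n p (Y n) = sum p G + p r" using L1GR Rr by simp
      have rG: "r \<notin> G" using rR unfolding R_def G_def by auto
      have bG: "b \<notin> G" using bY Yn(2) unfolding G_def by auto
      show ?thesis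
      proof (cases "r \<in> S")
        case False
        have "sum p (insert r G) \<le> sum p ({1..n} - S)"
          using GS pnn False rn by (intro sum_mono2) auto
        then show ?thesis using L1r rG finGR l1S M2 by simp
      next
        case True
        have "b \<notin> S" using nosame[OF rn bn _ rb] True rY bY by auto
        then have "sum p (insert b G) \<le> sum p ({1..n} - S)"
          using GS pnn bn by (intro sum_mono2) auto
        then have "sum p G + p b \<le> 1" using bG finGR l1S by simp
        moreover have "(1 - M) * p r \<le> (1 - M) * 1" using p1[OF rn] M2 by (intro mult_left_mono) auto
        ultimately show ?thesis using L1r pb by (simp add: algebra_simps)
      qed
    qed
  qed
  show ?thesis using mig L1 Yn(3) unfolding makespan_def by simp
qed

end
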